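(* Let $\mathcal G$ be a connected signed graph with normalized signed Laplacian $\mathcal L$. If $\mathcal G$ is structurally unbalanced, then $\lambda_2(\mathcal L)<1$.
   Context: Let $\mathcal G$ be an undirected, connected signed graph on $n$ nodes without self-loops, with symmetric adjacency matrix $A=[a_{ij}]$ having zero diagonal and entries of either sign, where $a_{ij}\ne0$ iff $\{i,j\}$ is an edge. Let $\delta_i=\sum_j|a_{ij}|>0$ and $\Delta=\mathrm{diag}(\delta_i)$. The normalized signed Laplacian is $\mathcal L=I-\Delta^{-1}A$; its eigenvalues are real and ordered $\lambda_1(\mathcal L)\le\dots\le\lambda_n(\mathcal L)$. $\mathcal G$ is structurally balanced if there is a signature matrix $S=\mathrm{diag}(s_i)$, $s_i=\pm1$, such that $SAS$ is entrywise nonnegative; otherwise it is structurally unbalanced. *)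

theory Defs
  imports "Jordan_Normal_Form.Char_Poly" "HOL-Computational_Algebra.Polynomial"
begin

definition signed_graph :: "nat \<Rightarrow> real mat \<Rightarrow> bool" where
  "signed_graph n A \<longleftrightarrow> A \<in> carrier_mat n n \<and> A\<^sup>T = A \<and> (\<forall>i<n. A $$ (i, i) = 0)"

definition edge_rel :: "nat \<Rightarrow> real mat \<Rightarrow> (nat \<times> nat) set" where
  "edge_rel n A = {(i, j). i < n \<and> j < n \<and> A $$ (i, j) \<noteq> 0}"

definition connected_sg :: "nat \<Rightarrow> real mat \<Rightarrow> bool" where
  "connected_sg n A \<longleftrightarrow> (\<forall>i<n. \<forall>j<n. (i, j) \<in> (edge_rel n A)\<^sup>*)"

definition sdeg :: "nat \<Rightarrow> real mat \<Rightarrow> nat \<Rightarrow> real" where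
  "sdeg n A i = (\<Sum>j<n. \<bar>A $$ (i, j)\<bar>)"

definition norm_signed_laplacian :: "nat \<Rightarrow> real mat \<Rightarrow> real mat" where
  "norm_signed_laplacian n A =
     1\<^sub>m n - mat n n (\<lambda>(i, j). if i = j then 1 / sdeg n A i else 0) * A"

definition structurally_balanced :: "nat \<Rightarrow> real mat \<Rightarrow> bool" where
  "structurally_balanced n A \<longleftrightarrow>
     (\<exists>s :: nat \<Rightarrow> real. (\<forall>i<n. s i = 1 \<or> s i = -1) \<and>
        (\<forall>i<n. \<forall>j<n. (mat n n (\<lambda>(i, j). if i = j then s i else 0) * A
                          * mat n n (\<lambda>(i, j). if i = j then s i else 0)) $$ (i, j) \<ge> 0))"

text \<open>Eigenvalues (with algebraic multiplicity) in nondecreasing order, as the sorted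
  list of the real roots of the characteristic polynomial; for the matrices considered
  all eigenvalues are real. lambda k (1-indexed) is the k-th smallest.\<close>
definition sorted_eigenvalues :: "real mat \<Rightarrow> real list" where
  "sorted_eigenvalues M = sorted_list_of_multiset (proots (char_poly M))"

definition eig_lambda :: "real mat \<Rightarrow> nat \<Rightarrow> real" where
  "eig_lambda M k = sorted_eigenvalues M ! (k - 1)"

end

theory Submission
  imports Defs
begin


lemma sym_real_eigen:
  fixes M :: "real mat"
  assumes M: "M \<in> carrier_mat n n" and sym: "M\<^sup>T = M" and n: "n > 0"
  shows "\<exists>\<mu> v. v \<in> carrier_vec n \<and> v \<noteq> 0\<^sub>v n \<and> M *\<^sub>v v = \<mu> \<cdot>\<^sub>v v"
proof -
  define Mc where "Mc = map_mat complex_of_real M"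
  have Mc: "Mc \<in> carrier_mat n n" using M by (simp add: Mc_def)
  obtain as where cp: "char_poly Mc = (\<Prod>a\<leftarrow>as. [:-a,1:])" and len: "length as = n"
    using char_poly_factorized[OF Mc] by blast
  then obtain a where aas: "a \<in> set as" using n by (cases as) auto
  hence "poly (char_poly Mc) a = 0" unfolding cp poly_prod_list prod_list_zero_iff by auto
  hence "eigenvalue Mc a" using eigenvalue_root_char_poly[OF Mc] by simp
  then obtain v where ev: "eigenvector Mc v a" unfolding eigenvalue_def by blast
  hence v: "v \<in> carrier_vec n" "v \<noteq> 0\<^sub>v n" "Mc *\<^sub>v v = a \<cdot>\<^sub>v v" using Mc unfolding eigenvector_def by auto
  define s where "s = (\<Sum>i<n. \<Sum>j<n. cnj (v$i) * complex_of_real (M$$(i,j)) * v$j)"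
  define r where "r = (\<Sum>i<n. cnj (v$i) * v$i)"
  have mv: "(Mc *\<^sub>v v) $ i = (\<Sum>j<n. complex_of_real (M$$(i,j)) * v$j)" if "i < n" for i
    using that Mc v(1) M unfolding Mc_def by (auto simp: scalar_prod_def lessThan_atLeast0 intro!: sum.cong)
  have "s = (\<Sum>i<n. cnj (v$i) * (Mc *\<^sub>v v) $ i)"
    unfolding s_def by (simp add: mv sum_distrib_left mult.assoc)
  also have "\<dots> = a * r" unfolding r_def using v by (simp add: sum_distrib_left algebra_simps)
  finally have sar: "s = a * r" .
  have "cnj s = (\<Sum>i<n. \<Sum>j<n. v$i * complex_of_real (M$$(i,j)) * cnj (v$j))"
    unfolding s_def by simp
  also have "\<dots> = (\<Sum>j<n. \<Sum>i<n. v$i * complex_of_real (M$$(i,j)) * cnj (v$j))"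
    by (rule sum.swap)
  also have "\<dots> = s" unfolding s_def
  proof (intro sum.cong refl)
    fix i j assume "i \<in> {..<n}" "j \<in> {..<n}"
    hence "M $$ (j,i) = M $$ (i,j)" using M sym by (metis carrier_matD index_transpose_mat(1) lessThan_iff)
    thus "v$j * complex_of_real (M$$(j,i)) * cnj (v$i) = cnj (v$i) * complex_of_real (M$$(i,j)) * v$j"
      by simp
  qed
  finally have cs: "cnj s = s" .
  have rr: "r = complex_of_real (\<Sum>i<n. (cmod (v$i))^2)"
    unfolding r_def of_real_sum by (intro sum.cong refl, subst complex_norm_square, simp add: mult.commute)
  obtain i where i: "i < n" "v $ i \<noteq> 0" using v by (metis eq_vecI carrier_vecD index_zero_vec)
  have "(\<Sum>i<n. (cmod (v$i))^2) > 0"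
    by (rule sum_pos2[of _ i]) (use i in auto)
  hence r0: "r \<noteq> 0" unfolding rr by (metis less_irrefl of_real_eq_0_iff)
  have "cnj a * r = a * r" using cs sar rr by (metis complex_cnj_complex_of_real complex_cnj_mult)
  hence "cnj a = a" using r0 by simp
  hence aR: "a = complex_of_real (Re a)" by (metis Reals_cnj_iff of_real_Re)
  have "poly (map_poly complex_of_real (char_poly M)) (complex_of_real (Re a)) = 0"
    using `poly (char_poly Mc) a = 0` of_real_hom.char_poly_hom[OF M] aR unfolding Mc_def by metis
  hence "poly (char_poly M) (Re a) = 0" by (simp add: of_real_hom.poly_map_poly)
  hence "eigenvalue M (Re a)" using eigenvalue_root_char_poly[OF M] by simp
  then obtain w where "eigenvector M w (Re a)" unfolding eigenvalue_def by blast
  thus ?thesis using M unfolding eigenvector_def by auto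
qed



lemma householder:
  fixes q :: "real vec"
  assumes q: "q \<in> carrier_vec N" and unit: "q \<bullet> q = 1" and N: "N > 0"
  shows "\<exists>H. H \<in> carrier_mat N N \<and> H\<^sup>T = H \<and> H * H = 1\<^sub>m N \<and> H *\<^sub>v unit_vec N 0 = q"
proof (cases "q = unit_vec N 0")
  case True
  then show ?thesis by (intro exI[of _ "1\<^sub>m N"]) auto
next
  case False
  define w where "w = unit_vec N 0 - q"
  have w: "w \<in> carrier_vec N" using q by (simp add: w_def)
  have wi: "w $ i = (if i = 0 then 1 else 0) - q $ i" if "i < N" for i
    using that q by (simp add: w_def)
  define ww where "ww = (\<Sum>k<N. w$k * w$k)"
  have "w \<noteq> 0\<^sub>v N"
  proof
    assume w0: "w = 0\<^sub>v N"
    have "q = unit_vec N 0"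
    proof (rule eq_vecI)
      fix i assume "i < dim_vec (unit_vec N 0)" hence i: "i<N" by simp
      have "w $ i = 0" using w0 i by simp
      thus "q $ i = unit_vec N 0 $ i" using wi[OF i] i by simp
    qed (use q in simp)
    thus False using False by simp
  qed
  then obtain k where k: "k < N" "w $ k \<noteq> 0" using w by (metis eq_vecI carrier_vecD index_zero_vec)
  have ww0: "ww > 0" unfolding ww_def
    by (rule sum_pos2[of _ k]) (use k in \<open>auto simp: zero_less_mult_iff linorder_neq_iff\<close>)
  define c where "c = 2 / ww"
  have cww: "c * ww = 2" using ww0 by (simp add: c_def)
  define H where "H = mat N N (\<lambda>(i,j). (if i = j then 1 else 0) - c * w$i * w$j)"
  have H: "H \<in> carrier_mat N N" by (simp add: H_def)
  have HT: "H\<^sup>T = H" by (rule eq_matI) (auto simp: H_def)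
  have HH: "H * H = 1\<^sub>m N"
  proof (rule eq_matI)
    fix i j assume i: "i < dim_row (1\<^sub>m N)" and j: "j < dim_col (1\<^sub>m N)"
    hence ij: "i < N" "j < N" by auto
    have "(H * H) $$ (i,j) = (\<Sum>k<N. H $$ (i,k) * H $$ (k,j))"
      using ij H by (auto simp: scalar_prod_def lessThan_atLeast0 intro!: sum.cong)
    also have "\<dots> = (\<Sum>k<N. (if k = i then (if i = j then 1 else 0) else 0)
         - (if k = i then c * w$k * w$j else 0) - (if k = j then c * w$i * w$k else 0)
         + c * c * w$i * w$j * (w$k * w$k))"
      using ij by (intro sum.cong refl) (auto simp: H_def algebra_simps)
    also have "\<dots> = (if i = j then 1 else 0) - c * w$i * w$j - c * w$i * w$j + c * c * w$i * w$j * ww"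
      using ij by (simp add: sum.distrib sum_subtractf sum_distrib_left ww_def)
    also have "\<dots> = (if i = j then 1 else 0)"
      using cww by (simp add: algebra_simps)
    finally show "(H * H) $$ (i,j) = 1\<^sub>m N $$ (i,j)" using ij by simp
  qed (use H in auto)
  have ww2: "ww = 2 - 2 * q $ 0"
  proof -
    have "ww = (\<Sum>k<N. (if k = 0 then 1 else 0) - (if k = 0 then 2 * q $ 0 else 0) + q$k * q$k)"
      unfolding ww_def by (intro sum.cong refl) (auto simp: wi power2_eq_square algebra_simps)
    also have "\<dots> = 1 - 2 * q $ 0 + (\<Sum>k<N. q$k * q$k)"
      using N by (simp add: sum.distrib sum_subtractf)
    also have "(\<Sum>k<N. q$k * q$k) = 1" using unit q by (auto simp: scalar_prod_def lessThan_atLeast0)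
    finally show ?thesis by simp
  qed
  have cw0: "c * w $ 0 = 1" using ww0 ww2 N by (simp add: c_def wi field_simps)
  have He: "H *\<^sub>v unit_vec N 0 = q"
  proof (rule eq_vecI)
    fix i assume "i < dim_vec q"
    hence i: "i < N" using q by auto
    have "(H *\<^sub>v unit_vec N 0) $ i = H $$ (i, 0)"
      using i H N by (simp add: row_def)
    also have "\<dots> = (if i = 0 then 1 else 0) - w $ i * (c * w$0)" using i N by (simp add: H_def)
    also have "\<dots> = q $ i" using cw0 i by (simp add: wi)
    finally show "(H *\<^sub>v unit_vec N 0) $ i = q $ i" .
  qed (use H q in auto)
  show ?thesis using H HT HH He by blast
qed



definition diagm :: "nat \<Rightarrow> (nat \<Rightarrow> real) \<Rightarrow> real mat" where
  "diagm n d = mat n n (\<lambda>(i,j). if i = j then d i else 0)"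

lemma diagm_carrier[simp]: "diagm n d \<in> carrier_mat n n" by (simp add: diagm_def)
lemma diagm_dims[simp]: "dim_row (diagm n d) = n" "dim_col (diagm n d) = n" by (simp_all add: diagm_def)

lemma spectral:
  fixes M :: "real mat"
  assumes "M \<in> carrier_mat n n" "M\<^sup>T = M"
  shows "\<exists>U d. U \<in> carrier_mat n n \<and> U\<^sup>T * U = 1\<^sub>m n \<and> M = U * diagm n d * U\<^sup>T"
  using assms
proof (induction n arbitrary: M)
  case 0
  show ?case
    by (rule exI[of _ "1\<^sub>m 0"], rule exI[of _ "\<lambda>_. 0"]) (use 0 in \<open>auto intro!: eq_matI\<close>)
next
  case (Suc n)
  note M = Suc.prems(1) and sym = Suc.prems(2)
  obtain \<mu> v where v: "v \<in> carrier_vec (Suc n)" "v \<noteq> 0\<^sub>v (Suc n)" "M *\<^sub>v v = \<mu> \<cdot>\<^sub>v v"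
    using sym_real_eigen[OF M sym] by blast
  obtain k where k: "k < Suc n" "v $ k \<noteq> 0" using v by (metis eq_vecI carrier_vecD index_zero_vec)
  have vv: "v \<bullet> v > 0" using v(1) unfolding scalar_prod_def
    by (intro sum_pos2[of _ k]) (use k in \<open>auto simp: zero_less_mult_iff linorder_neq_iff\<close>)
  define q where "q = (1 / sqrt (v \<bullet> v)) \<cdot>\<^sub>v v"
  have q: "q \<in> carrier_vec (Suc n)" using v by (simp add: q_def)
  have qq: "q \<bullet> q = 1" using vv v(1) unfolding q_def
    by (simp add: smult_scalar_prod_distrib scalar_prod_smult_distrib)
  have Mq: "M *\<^sub>v q = \<mu> \<cdot>\<^sub>v q" using v M unfolding q_def
    by (simp add: mult_mat_vec smult_smult_assoc mult.commute)
  obtain H where H: "H \<in> carrier_mat (Suc n) (Suc n)" and HT: "H\<^sup>T = H"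
    and HH: "H * H = 1\<^sub>m (Suc n)" and He: "H *\<^sub>v unit_vec (Suc n) 0 = q"
    using householder[OF q qq] by blast
  define e :: "real vec" where "e = unit_vec (Suc n) 0"
  have e: "e \<in> carrier_vec (Suc n)" by (simp add: e_def)
  define M1 where "M1 = H * M * H"
  have M1: "M1 \<in> carrier_mat (Suc n) (Suc n)" using H M by (simp add: M1_def)
  have M1T: "M1\<^sup>T = M1" unfolding M1_def using H M HT sym
    by (simp add: transpose_mult[of _ "Suc n" "Suc n" _ "Suc n"] assoc_mult_mat[of _ "Suc n" "Suc n" _ "Suc n" _ "Suc n"])
  have Hq: "H *\<^sub>v q = e"
    using He H e HH unfolding e_def by (metis assoc_mult_mat_vec one_mult_mat_vec unit_vec_carrier)
  have "M1 *\<^sub>v e = \<mu> \<cdot>\<^sub>v e"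
  proof -
    have "M1 *\<^sub>v e = H *\<^sub>v (M *\<^sub>v (H *\<^sub>v e))" unfolding M1_def using H M e
      by (simp add: assoc_mult_mat_vec[of _ "Suc n" "Suc n" _ "Suc n"])
    also have "\<dots> = \<mu> \<cdot>\<^sub>v e" using He Mq Hq H q unfolding e_def[symmetric]
      by (simp add: mult_mat_vec)
    finally show ?thesis .
  qed
  hence col0: "M1 $$ (i,0) = (if i = 0 then \<mu> else 0)" if "i < Suc n" for i
  proof -
    have "M1 $$ (i,0) = (M1 *\<^sub>v e) $ i" using that M1 by (simp add: e_def row_def)
    thus ?thesis using `M1 *\<^sub>v e = \<mu> \<cdot>\<^sub>v e` that by (simp add: e_def)
  qed
  have row0: "M1 $$ (0,j) = (if j = 0 then \<mu> else 0)" if "j < Suc n" for j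
  proof -
    have "M1 $$ (0,j) = M1\<^sup>T $$ (j,0)" using that M1 by simp
    thus ?thesis using M1T col0[OF that] by simp
  qed
  define M3 where "M3 = mat n n (\<lambda>(i,j). M1 $$ (Suc i, Suc j))"
  have M3: "M3 \<in> carrier_mat n n" by (simp add: M3_def)
  have M3T: "M3\<^sup>T = M3"
  proof (rule eq_matI)
    fix i j assume "i < dim_row M3" "j < dim_col M3"
    hence ij: "i < n" "j < n" by (auto simp: M3_def)
    have "M1 $$ (Suc j, Suc i) = M1\<^sup>T $$ (Suc i, Suc j)" using ij M1 by simp
    thus "M3\<^sup>T $$ (i,j) = M3 $$ (i,j)" using ij M1T by (simp add: M3_def)
  qed (auto simp: M3_def)
  obtain U3 d3 where U3: "U3 \<in> carrier_mat n n" and U3U3: "U3\<^sup>T * U3 = 1\<^sub>m n"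
    and M3eq: "M3 = U3 * diagm n d3 * U3\<^sup>T"
    using Suc.IH[OF M3 M3T] by blast
  define B where "B = four_block_mat (1\<^sub>m 1) (0\<^sub>m 1 n) (0\<^sub>m n 1) U3"
  have B: "B \<in> carrier_mat (Suc n) (Suc n)" using U3 unfolding B_def
    using four_block_carrier_mat[of "1\<^sub>m 1" 1 1 U3 n n] by simp
  have BT: "B\<^sup>T = four_block_mat (1\<^sub>m 1) (0\<^sub>m 1 n) (0\<^sub>m n 1) U3\<^sup>T"
    unfolding B_def using U3 by (subst transpose_four_block_mat[of _ 1 1 _ n _ n]) auto
  have BTB: "B\<^sup>T * B = 1\<^sub>m (Suc n)"
    unfolding BT unfolding B_def using U3 U3U3
    by (subst mult_four_block_mat[of _ 1 1 _ n _ n _ _ 1 _ n]) auto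
  define \<mu>m where "\<mu>m = mat 1 1 (\<lambda>_. \<mu>)"
  have \<mu>m: "\<mu>m \<in> carrier_mat 1 1" by (simp add: \<mu>m_def)
  define d where "d = (\<lambda>i. if i = 0 then \<mu> else d3 (i - 1))"
  have D: "diagm (Suc n) d = four_block_mat \<mu>m (0\<^sub>m 1 n) (0\<^sub>m n 1) (diagm n d3)"
    by (rule eq_matI) (auto simp: diagm_def \<mu>m_def d_def)
  have BDB: "B * diagm (Suc n) d * B\<^sup>T = M1"
  proof -
    have "B * diagm (Suc n) d = four_block_mat \<mu>m (0\<^sub>m 1 n) (0\<^sub>m n 1) (U3 * diagm n d3)"
      unfolding D B_def using U3 \<mu>m diagm_carrier[of n d3]
      by (subst mult_four_block_mat[of _ 1 1 _ n _ n _ _ 1 _ n]) auto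
    also have "\<dots> * B\<^sup>T = four_block_mat \<mu>m (0\<^sub>m 1 n) (0\<^sub>m n 1) M3"
      unfolding BT M3eq using U3 \<mu>m diagm_carrier[of n d3]
      by (subst mult_four_block_mat[of _ 1 1 _ n _ n _ _ 1 _ n]) auto
    also have "\<dots> = M1"
    proof (rule eq_matI)
      fix i j assume "i < dim_row M1" "j < dim_col M1"
      hence ij: "i < Suc n" "j < Suc n" using M1 by auto
      show "four_block_mat \<mu>m (0\<^sub>m 1 n) (0\<^sub>m n 1) M3 $$ (i, j) = M1 $$ (i, j)"
        using ij \<mu>m M3 col0 row0 by (cases i; cases j) (auto simp: \<mu>m_def M3_def)
    qed (use M1 \<mu>m M3 in auto)
    finally show ?thesis .
  qed
  define U where "U = H * B"
  have U: "U \<in> carrier_mat (Suc n) (Suc n)" using H B by (simp add: U_def)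
  have UT: "U\<^sup>T = B\<^sup>T * H" unfolding U_def using H B HT by (simp add: transpose_mult)
  have "U\<^sup>T * U = B\<^sup>T * (H * H) * B" unfolding UT unfolding U_def using H B
    by (simp add: assoc_mult_mat[of _ "Suc n" "Suc n" _ "Suc n" _ "Suc n"])
  also have "\<dots> = 1\<^sub>m (Suc n)" using HH BTB B by simp
  finally have UU: "U\<^sup>T * U = 1\<^sub>m (Suc n)" .
  have cm: "\<And>X Y. X \<in> carrier_mat (Suc n) (Suc n) \<Longrightarrow> Y \<in> carrier_mat (Suc n) (Suc n) \<Longrightarrow>
     X * Y \<in> carrier_mat (Suc n) (Suc n)" by auto
  have BTc: "B\<^sup>T \<in> carrier_mat (Suc n) (Suc n)" using B by auto
  have "U * diagm (Suc n) d * U\<^sup>T = H * (B * diagm (Suc n) d * B\<^sup>T) * H"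
    unfolding UT unfolding U_def using H B BTc
    by (simp add: assoc_mult_mat[of _ "Suc n" "Suc n" _ "Suc n" _ "Suc n"] cm)
  also have "\<dots> = (H * H) * M * (H * H)" unfolding BDB M1_def using H M
    by (simp add: assoc_mult_mat[of _ "Suc n" "Suc n" _ "Suc n" _ "Suc n"])
  also have "\<dots> = M" using HH M by simp
  finally show ?case using U UU by metis
qed



lemma sum_delta_l: "(i::nat) < n \<Longrightarrow> (\<Sum>ia = 0..<n. (if i = ia then c else 0) * g ia) = c * (g i :: real)"
proof -
  assume i: "i < n"
  have "(\<Sum>ia = 0..<n. (if i = ia then c else 0) * g ia) = (\<Sum>ia = 0..<n. if ia = i then c * g i else 0)"
    by (rule sum.cong) auto
  also have "\<dots> = c * g i" using i by simp
  finally show ?thesis .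
qed

lemma sum_delta_r: "(j::nat) < n \<Longrightarrow> (\<Sum>ia = 0..<n. g ia * (if ia = j then c ia else 0)) = g j * (c j :: real)"
proof -
  assume j: "j < n"
  have "(\<Sum>ia = 0..<n. g ia * (if ia = j then c ia else 0)) = (\<Sum>ia = 0..<n. if ia = j then g j * c j else 0)"
    by (rule sum.cong) auto
  also have "\<dots> = g j * c j" using j by simp
  finally show ?thesis .
qed

lemma diagm_mult_left:
  assumes "X \<in> carrier_mat n m" "i < n" "j < m"
  shows "(diagm n a * X) $$ (i,j) = a i * X $$ (i,j)"
  using assms by (auto simp: scalar_prod_def diagm_def sum_delta_l)

lemma diagm_mult_right:
  assumes "X \<in> carrier_mat m n" "i < m" "j < n"
  shows "(X * diagm n a) $$ (i,j) = X $$ (i,j) * a j"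
  using assms by (auto simp: scalar_prod_def diagm_def sum_delta_r)

lemma diagm_mult_diagm: "diagm n a * diagm n b = diagm n (\<lambda>i. a i * b i)"
proof (rule eq_matI)
  fix i j assume "i < dim_row (diagm n (\<lambda>i. a i * b i))" "j < dim_col (diagm n (\<lambda>i. a i * b i))"
  thus "(diagm n a * diagm n b) $$ (i, j) = diagm n (\<lambda>i. a i * b i) $$ (i, j)"
    by (subst diagm_mult_left[of _ n n]) (auto simp: diagm_def)
qed auto

lemma quad_form_2:
  fixes A :: "real mat"
  assumes "i < n" "j < n" "i \<noteq> j"
  shows "(\<Sum>a<n. \<Sum>b<n. (if a = i then t else if a = j then r else 0) * A $$ (a,b) *
            (if b = i then t else if b = j then r else 0))
        = t*t*A$$(i,i) + t*r*A$$(i,j) + r*t*A$$(j,i) + r*r*A$$(j,j)"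
proof -
  have inner: "(\<Sum>b<n. c * A $$ (a,b) * (if b = i then t else if b = j then r else 0))
      = c * A$$(a,i) * t + c * A$$(a,j) * r" for a c
  proof -
    have "(\<Sum>b<n. c * A $$ (a,b) * (if b = i then t else if b = j then r else 0))
      = (\<Sum>b<n. (if b = i then c * A$$(a,i) * t else 0) + (if b = j then c * A$$(a,j) * r else 0))"
      using assms by (intro sum.cong) auto
    also have "\<dots> = c * A$$(a,i) * t + c * A$$(a,j) * r" using assms by (simp add: sum.distrib)
    finally show ?thesis .
  qed
  have "(\<Sum>a<n. \<Sum>b<n. (if a = i then t else if a = j then r else 0) * A $$ (a,b) *
            (if b = i then t else if b = j then r else 0))
      = (\<Sum>a<n. (if a = i then t * A$$(i,i) * t + t * A$$(i,j) * r else 0)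
               + (if a = j then r * A$$(j,i) * t + r * A$$(j,j) * r else 0))"
    using assms by (intro sum.cong refl) (auto simp: inner)
  also have "\<dots> = t*t*A$$(i,i) + t*r*A$$(i,j) + r*t*A$$(j,i) + r*r*A$$(j,j)"
    using assms by (simp add: sum.distrib algebra_simps)
  finally show ?thesis .
qed

lemma lin_form_2:
  fixes v :: "nat \<Rightarrow> real"
  assumes "i < n" "j < n" "i \<noteq> j"
  shows "(\<Sum>a<n. v a * (if a = i then t else if a = j then r else 0)) = v i * t + v j * r"
proof -
  have "(\<Sum>a<n. v a * (if a = i then t else if a = j then r else 0))
     = (\<Sum>a<n. (if a = i then v i * t else 0) + (if a = j then v j * r else 0))"
    using assms by (intro sum.cong) auto
  also have "\<dots> = v i * t + v j * r" using assms by (simp add: sum.distrib)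
  finally show ?thesis .
qed

lemma balanced_of_qf:
  fixes A :: "real mat" and v :: "nat \<Rightarrow> real"
  assumes sg: "signed_graph n A"
    and qf: "\<And>x. (\<Sum>a<n. \<Sum>b<n. x a * A $$ (a,b) * x b) \<le> (\<Sum>a<n. v a * x a)^2"
  shows "structurally_balanced n A"
proof -
  have A: "A \<in> carrier_mat n n" and AT: "A\<^sup>T = A" and diag0: "\<And>i. i < n \<Longrightarrow> A $$ (i,i) = 0"
    using sg unfolding signed_graph_def by auto
  have Asym: "A $$ (j,i) = A $$ (i,j)" if "i < n" "j < n" for i j
    using AT A that by (metis carrier_matD index_transpose_mat(1))
  define s where "s = (\<lambda>i. if v i \<ge> 0 then (1::real) else -1)"
  have key: "2 * t * r * A $$ (i,j) \<le> (v i * t + v j * r)^2" if ij: "i < n" "j < n" "i \<noteq> j" for i j t r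
  proof -
    have "(\<Sum>a<n. \<Sum>b<n. (if a = i then t else if a = j then r else 0) * A $$ (a,b) *
            (if b = i then t else if b = j then r else 0)) \<le> (v i * t + v j * r)^2"
      using qf[of "\<lambda>a. if a = i then t else if a = j then r else 0"] lin_form_2[OF ij, of v t r] by simp
    thus ?thesis unfolding quad_form_2[OF ij] using diag0 ij Asym[of i j] by (simp add: algebra_simps)
  qed
  have ent: "s i * A $$ (i,j) * s j \<ge> 0" if ij: "i < n" "j < n" for i j
  proof (cases "i = j")
    case True thus ?thesis using diag0 ij by simp
  next
    case False
    note k = key[OF ij False]
    show ?thesis
    proof (cases "v i = 0")
      case vi: True
      have "A $$ (i,j) = 0"
      proof (rule ccontr)
        assume a: "A $$ (i,j) \<noteq> 0"
        have "2 * ((v j ^ 2 + 1) / (2 * A $$ (i,j))) * 1 * A $$ (i,j) \<le> (v j * 1)^2"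
          using k[of "(v j ^ 2 + 1) / (2 * A $$ (i,j))" 1] vi by simp
        moreover have "2 * ((v j ^ 2 + 1) / (2 * A $$ (i,j))) * 1 * A $$ (i,j) = v j ^ 2 + 1"
          using a by (simp add: field_simps)
        ultimately show False by simp
      qed
      thus ?thesis by simp
    next
      case vi: False
      show ?thesis
      proof (cases "v j = 0")
        case vj: True
        have "A $$ (i,j) = 0"
        proof (rule ccontr)
          assume a: "A $$ (i,j) \<noteq> 0"
          have "2 * 1 * ((v i ^ 2 + 1) / (2 * A $$ (i,j))) * A $$ (i,j) \<le> (v i * 1)^2"
            using k[of 1 "(v i ^ 2 + 1) / (2 * A $$ (i,j))"] vj by simp
          moreover have "2 * 1 * ((v i ^ 2 + 1) / (2 * A $$ (i,j))) * A $$ (i,j) = v i ^ 2 + 1"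
            using a by (simp add: field_simps)
          ultimately show False by simp
        qed
        thus ?thesis by simp
      next
        case vj: False
        have "2 * v j * (- v i) * A $$ (i,j) \<le> 0" using k[of "v j" "- v i"] by (simp add: algebra_simps)
        hence p: "v i * v j * A $$ (i,j) \<ge> 0" by (simp add: algebra_simps)
        show ?thesis
          using p vi vj unfolding s_def
          by (cases "v i > 0"; cases "v j > 0") (auto simp: mult_le_0_iff zero_le_mult_iff)
      qed
    qed
  qed
  show ?thesis unfolding structurally_balanced_def
  proof (intro exI[of _ s] conjI allI impI)
    fix i assume "i < n" show "s i = 1 \<or> s i = -1" by (simp add: s_def)
  next
    fix i j assume ij: "i < n" "j < n"
    have S: "mat n n (\<lambda>(i, j). if i = j then s i else 0) = diagm n s" by (simp add: diagm_def)
    have "(diagm n s * A * diagm n s) $$ (i,j) = s i * A $$ (i,j) * s j"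
      using diagm_mult_right[OF _ ij, of "diagm n s * A" s] diagm_mult_left[OF A ij, of s] A mult_carrier_mat[OF diagm_carrier A] by simp
    thus "0 \<le> (mat n n (\<lambda>(i, j). if i = j then s i else 0) * A * mat n n (\<lambda>(i, j). if i = j then s i else 0)) $$ (i, j)"
      unfolding S using ent[OF ij] by simp
  qed
qed



lemma proots_linear_prod: "proots (\<Prod>a\<leftarrow>xs. [:- a, 1:]) = mset (xs :: real list)"
proof (induction xs)
  case Nil then show ?case by simp
next
  case (Cons a xs)
  have nz: "(\<Prod>a\<leftarrow>xs. [:- a, 1:]) \<noteq> (0 :: real poly)"
    by (auto simp: prod_list_zero_iff)
  have "proots (\<Prod>a\<leftarrow>a # xs. [:- a, 1:]) = proots [:- a, 1:] + proots (\<Prod>a\<leftarrow>xs. [:- a, 1:])"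
    unfolding list.map prod_list.Cons by (rule proots_mult) (use nz in auto)
  also have "proots [:- a, 1:] = {#a#}" using proots_linear_factor[of "-a"] by simp
  finally show ?case using Cons by simp
qed

lemma sort_second_lt:
  fixes f :: "nat \<Rightarrow> real"
  assumes ij: "i < n" "j < n" "i \<noteq> j" and fi: "f i < 1" and fj: "f j < 1"
  shows "sort (map f [0..<n]) ! 1 < 1"
proof (rule ccontr)
  define ys where "ys = sort (map f [0..<n])"
  assume "\<not> sort (map f [0..<n]) ! 1 < 1"
  hence y1: "ys ! 1 \<ge> 1" unfolding ys_def by simp
  have len: "length ys = n" unfolding ys_def by simp
  have sorted: "sorted ys" unfolding ys_def by simp
  have "{k. k < length ys \<and> ys ! k < 1} \<subseteq> {0}"
  proof
    fix k assume k: "k \<in> {k. k < length ys \<and> ys ! k < 1}"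
    show "k \<in> {0}"
    proof (rule ccontr)
      assume "k \<notin> {0}"
      hence "1 \<le> k" by auto
      hence "ys ! 1 \<le> ys ! k" using sorted_nth_mono[OF sorted] k by auto
      thus False using k y1 by auto
    qed
  qed
  hence "card {k. k < length ys \<and> ys ! k < 1} \<le> 1"
    using card_mono[of "{0::nat}"] by fastforce
  hence le1: "length (filter (\<lambda>x. x < 1) ys) \<le> 1" by (simp add: length_filter_conv_card)
  have "{i, j} \<subseteq> {k. k < length (map f [0..<n]) \<and> map f [0..<n] ! k < 1}"
    using ij fi fj by auto
  hence "card {i, j} \<le> card {k. k < length (map f [0..<n]) \<and> map f [0..<n] ! k < 1}"
    by (intro card_mono) auto
  hence "2 \<le> length (filter (\<lambda>x. x < 1) (map f [0..<n]))"
    using ij by (simp add: length_filter_conv_card)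
  also have "length (filter (\<lambda>x. x < 1) (map f [0..<n])) = length (filter (\<lambda>x. x < 1) ys)"
    unfolding ys_def filter_sort by simp
  finally show False using le1 by simp
qed



theorem lemma2:
  fixes n :: nat and A :: "real mat"
  assumes "signed_graph n A"
    and "connected_sg n A"
    and "\<forall>i<n. sdeg n A i > 0"
    and "\<not> structurally_balanced n A"
  shows "eig_lambda (norm_signed_laplacian n A) 2 < 1"
proof (rule ccontr)
  assume contra: "\<not> eig_lambda (norm_signed_laplacian n A) 2 < 1"
  note sg = assms(1)
  have A: "A \<in> carrier_mat n n" and AT: "A\<^sup>T = A" and diag0: "\<And>i. i < n \<Longrightarrow> A $$ (i,i) = 0"
    using sg unfolding signed_graph_def by auto
  have Asym: "A $$ (j,i) = A $$ (i,j)" if "i < n" "j < n" for i j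
    using AT A that by (metis carrier_matD index_transpose_mat(1))
  define r where "r = (\<lambda>i. sqrt (sdeg n A i))"
  have rpos: "r i > 0" if "i < n" for i using assms(3) that by (simp add: r_def)
  have rsq: "r i * r i = sdeg n A i" if "i < n" for i
    using assms(3) that by (simp add: r_def less_imp_le)
  define N where "N = mat n n (\<lambda>(i,j). A $$ (i,j) / (r i * r j))"
  have N: "N \<in> carrier_mat n n" by (simp add: N_def)
  have NT: "N\<^sup>T = N"
    by (rule eq_matI) (auto simp: N_def Asym mult.commute)
  obtain U d where U: "U \<in> carrier_mat n n" and UTU: "U\<^sup>T * U = 1\<^sub>m n"
    and Neq: "N = U * diagm n d * U\<^sup>T"
    using spectral[OF N NT] by blast
  have UT: "U\<^sup>T \<in> carrier_mat n n" using U by simp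
  have UUT: "U * U\<^sup>T = 1\<^sub>m n" using mat_mult_left_right_inverse[OF UT U UTU] .
  define D' where "D' = diagm n (\<lambda>i. 1 - d i)"
  have D': "D' \<in> carrier_mat n n" by (simp add: D'_def)
  have D'eq: "D' = 1\<^sub>m n - diagm n d" by (rule eq_matI) (auto simp: diagm_def D'_def)
  have UD'U: "U * D' * U\<^sup>T = 1\<^sub>m n - N"
  proof -
    have "U * D' = U - U * diagm n d" unfolding D'eq using U
      by (simp add: mult_minus_distrib_mat[of U n n "1\<^sub>m n" n])
    hence "U * D' * U\<^sup>T = U * U\<^sup>T - U * diagm n d * U\<^sup>T" using U UT
      by (simp add: minus_mult_distrib_mat[of U n n "U * diagm n d" "U\<^sup>T" n])
    thus ?thesis using UUT Neq by simp
  qed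
  define Ri where "Ri = diagm n (\<lambda>i. 1 / r i)"
  define R where "R = diagm n r"
  have Ri: "Ri \<in> carrier_mat n n" and R: "R \<in> carrier_mat n n" by (simp_all add: Ri_def R_def)
  define L where "L = norm_signed_laplacian n A"
  have Xc: "mat n n (\<lambda>(i, j). if i = j then 1 / sdeg n A i else 0) * A \<in> carrier_mat n n"
    by (rule mult_carrier_mat[OF _ A]) simp
  have L: "L \<in> carrier_mat n n" unfolding L_def norm_signed_laplacian_def by (rule minus_carrier_mat[OF Xc])
  have Leq: "L = Ri * (1\<^sub>m n - N) * R"
  proof (rule eq_matI)
    fix i j assume "i < dim_row (Ri * (1\<^sub>m n - N) * R)" "j < dim_col (Ri * (1\<^sub>m n - N) * R)"
    hence ij: "i < n" "j < n" using Ri R by auto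
    have c1: "1\<^sub>m n - N \<in> carrier_mat n n" by (rule minus_carrier_mat[OF N])
    have c2: "Ri * (1\<^sub>m n - N) \<in> carrier_mat n n" by (rule mult_carrier_mat[OF Ri c1])
    have e1: "(Ri * (1\<^sub>m n - N) * R) $$ (i,j) = (Ri * (1\<^sub>m n - N)) $$ (i,j) * r j"
      unfolding R_def by (rule diagm_mult_right[OF c2 ij])
    have e2: "(Ri * (1\<^sub>m n - N)) $$ (i,j) = (1 / r i) * (1\<^sub>m n - N) $$ (i,j)"
      unfolding Ri_def by (rule diagm_mult_left[OF c1 ij])
    have e3: "(1\<^sub>m n - N) $$ (i,j) = (if i = j then 1 else 0) - A $$ (i,j) / (r i * r j)"
      using ij N by (simp add: N_def)
    have "(Ri * (1\<^sub>m n - N) * R) $$ (i,j) = (1 / r i) * ((if i = j then 1 else 0) - A $$ (i,j) / (r i * r j)) * r j"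
      unfolding e1 e2 e3 by simp
    also have "\<dots> = (if i = j then 1 else 0) - 1 / sdeg n A i * A $$ (i,j)"
      using rpos[OF ij(1)] rpos[OF ij(2)] by (auto simp: rsq[OF ij(1), symmetric] field_simps)
    also have "\<dots> = L $$ (i,j)"
    proof -
      have Dm: "mat n n (\<lambda>(i, j). if i = j then 1 / sdeg n A i else 0) = diagm n (\<lambda>i. 1 / sdeg n A i)"
        by (simp add: diagm_def)
      show ?thesis unfolding L_def norm_signed_laplacian_def Dm
        using diagm_mult_left[OF A ij, of "\<lambda>i. 1 / sdeg n A i"] ij A by simp
    qed
    finally show "L $$ (i,j) = (Ri * (1\<^sub>m n - N) * R) $$ (i,j)" by simp
  qed (use L Ri R in auto)
  have RiR: "Ri * R = 1\<^sub>m n" "R * Ri = 1\<^sub>m n" unfolding Ri_def R_def diagm_mult_diagm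
    by (auto intro!: eq_matI simp: diagm_def dest!: rpos)
  have sim: "similar_mat L D'"
    unfolding similar_mat_def
  proof (intro exI)
    show "similar_mat_wit L D' (Ri * U) (U\<^sup>T * R)"
    proof (rule similar_mat_witI[of _ _ n])
      have "Ri * U * (U\<^sup>T * R) = Ri * ((U * U\<^sup>T) * R)"
        using Ri U UT R by (simp add: assoc_mult_mat[of _ n n _ n _ n])
      thus "Ri * U * (U\<^sup>T * R) = 1\<^sub>m n" using UUT RiR R by simp
      have "U\<^sup>T * R * (Ri * U) = U\<^sup>T * ((R * Ri) * U)"
        using Ri U UT R by (simp add: assoc_mult_mat[of _ n n _ n _ n])
      thus "U\<^sup>T * R * (Ri * U) = 1\<^sub>m n" using UTU RiR U by simp
      have "Ri * U * D' * (U\<^sup>T * R) = Ri * (U * D' * U\<^sup>T) * R"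
        using Ri U UT R D' by (simp add: assoc_mult_mat[of _ n n _ n _ n])
      thus "L = Ri * U * D' * (U\<^sup>T * R)" using Leq UD'U by simp
    qed (use L D' Ri U UT R in auto)
  qed
  have "char_poly L = char_poly D'" using char_poly_similar[OF sim] .
  also have "\<dots> = (\<Prod>a\<leftarrow>diag_mat D'. [:- a, 1:])"
    by (rule char_poly_upper_triangular[OF D']) (auto simp: upper_triangular_def D'_def diagm_def)
  also have "diag_mat D' = map (\<lambda>i. 1 - d i) [0..<n]"
    unfolding diag_mat_def by (auto simp: D'_def diagm_def)
  finally have cpL: "char_poly L = (\<Prod>a\<leftarrow>map (\<lambda>i. 1 - d i) [0..<n]. [:- a, 1:])" .
  have eig: "eig_lambda L 2 = sort (map (\<lambda>i. 1 - d i) [0..<n]) ! 1"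
    unfolding eig_lambda_def sorted_eigenvalues_def cpL proots_linear_prod sorted_list_of_multiset_mset by simp
  have np: "i = j" if "i < n" "j < n" "d i > 0" "d j > 0" for i j
  proof (rule ccontr)
    assume "i \<noteq> j"
    hence "eig_lambda L 2 < 1" unfolding eig using sort_second_lt[of i n j "\<lambda>i. 1 - d i"] that by simp
    thus False using contra unfolding L_def by simp
  qed
  obtain k where k: "\<And>l. l < n \<Longrightarrow> l \<noteq> k \<Longrightarrow> d l \<le> 0"
  proof (cases "\<exists>k<n. d k > 0")
    case True
    then obtain k where "k < n" "d k > 0" by blast
    thus ?thesis using that np by (metis not_le)
  next
    case False thus ?thesis using that by (metis not_le)
  qed
  define c where "c = sqrt (max (d k) 0)"
  define v where "v = (\<lambda>a. r a * c * U $$ (a,k))"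
  have Nent: "N $$ (a,b) = (\<Sum>l<n. U $$ (a,l) * d l * U $$ (b,l))" if ab: "a < n" "b < n" for a b
  proof -
    have c1: "U * diagm n d \<in> carrier_mat n n" by (rule mult_carrier_mat[OF U diagm_carrier])
    have "N $$ (a,b) = (\<Sum>l\<in>{0..<n}. (U * diagm n d) $$ (a,l) * U\<^sup>T $$ (l,b))"
      unfolding Neq using ab U c1 by (simp add: scalar_prod_def)
    also have "\<dots> = (\<Sum>l<n. U $$ (a,l) * d l * U $$ (b,l))"
      unfolding lessThan_atLeast0 using ab U by (intro sum.cong refl) (auto simp: diagm_mult_right[OF U ab(1)] simp del: index_mult_mat)
    finally show ?thesis .
  qed
  have Aent: "A $$ (a,b) = r a * N $$ (a,b) * r b" if ab: "a < n" "b < n" for a b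
    using ab rpos[OF ab(1)] rpos[OF ab(2)] by (simp add: N_def)
  have qf: "(\<Sum>a<n. \<Sum>b<n. x a * A $$ (a,b) * x b) \<le> (\<Sum>a<n. v a * x a)^2" for x
  proof -
    define y where "y = (\<lambda>a. r a * x a)"
    define z where "z = (\<lambda>l. \<Sum>a<n. U $$ (a,l) * y a)"
    have "(\<Sum>a<n. \<Sum>b<n. x a * A $$ (a,b) * x b) = (\<Sum>a<n. \<Sum>b<n. \<Sum>l<n. d l * (U $$ (a,l) * y a) * (U $$ (b,l) * y b))"
      by (intro sum.cong refl) (auto simp: Aent Nent sum_distrib_left sum_distrib_right y_def algebra_simps intro!: sum.cong)
    also have "\<dots> = (\<Sum>a<n. \<Sum>l<n. \<Sum>b<n. d l * (U $$ (a,l) * y a) * (U $$ (b,l) * y b))"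
      by (intro sum.cong refl sum.swap)
    also have "\<dots> = (\<Sum>l<n. \<Sum>a<n. \<Sum>b<n. d l * (U $$ (a,l) * y a) * (U $$ (b,l) * y b))"
      by (rule sum.swap)
    also have "\<dots> = (\<Sum>l<n. d l * z l * z l)"
    proof (intro sum.cong refl)
      fix l
      have "d l * z l * z l = d l * ((\<Sum>a<n. U $$ (a,l) * y a) * (\<Sum>b<n. U $$ (b,l) * y b))"
        by (simp add: z_def)
      also have "\<dots> = d l * (\<Sum>a<n. \<Sum>b<n. (U $$ (a,l) * y a) * (U $$ (b,l) * y b))"
        by (simp only: sum_product)
      also have "\<dots> = (\<Sum>a<n. \<Sum>b<n. d l * (U $$ (a,l) * y a) * (U $$ (b,l) * y b))"
        by (simp add: sum_distrib_left mult.assoc)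
      finally show "(\<Sum>a<n. \<Sum>b<n. d l * (U $$ (a,l) * y a) * (U $$ (b,l) * y b)) = d l * z l * z l" by simp
    qed
    also have "\<dots> \<le> (\<Sum>l<n. if l = k then max (d k) 0 * z k * z k else 0)"
    proof (rule sum_mono)
      fix l assume l: "l \<in> {..<n}"
      have zz: "z l * z l \<ge> 0" by simp
      show "d l * z l * z l \<le> (if l = k then max (d k) 0 * z k * z k else 0)"
      proof (cases "l = k")
        case True thus ?thesis using zz by (simp add: mult.assoc mult_right_mono)
      next
        case False
        hence "d l \<le> 0" using k l by auto
        thus ?thesis using False zz by (simp add: mult.assoc mult_nonpos_nonneg)
      qed
    qed
    also have "\<dots> \<le> max (d k) 0 * z k * z k"
      by (simp add: mult.assoc)
    also have "\<dots> = (\<Sum>a<n. v a * x a)^2"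
    proof -
      have "(\<Sum>a<n. v a * x a) = c * z k"
        unfolding v_def z_def y_def by (simp add: sum_distrib_left algebra_simps)
      moreover have "c * c = max (d k) 0" unfolding c_def by simp
      ultimately show ?thesis by (simp add: power2_eq_square algebra_simps)
    qed
    finally show ?thesis .
  qed
  have "structurally_balanced n A" by (rule balanced_of_qf[OF sg qf])
  thus False using assms(4) by simp
qed

end
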